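(* Let $k_1,k_2,m$ be positive integers. The map $\Lambda:J^1_{k,m}(\mathcal O_K)\to J_{k,m}(\mathcal O_K)$, $\phi\mapsto\sum_{\epsilon\in\mathcal O_K^\times}\phi|_k\epsilon I$ (with $k=k_1+k_2$), is well defined, and the bilinear map $H$ induces a linear map $H:J_{k_1,m}\otimes J_{k_2,m}\to J^1_{k_1+k_2,m}(\mathcal O_K)$, so that the composite $$J_{k_1,m}\otimes J_{k_2,m}\xrightarrow{H}J^1_{k_1+k_2,m}(\mathcal O_K)\xrightarrow{\Lambda}J_{k_1+k_2,m}(\mathcal O_K)$$ is a linear map which maps tensor products of cusp forms to cusp forms.
   Context: Notation: $\mathcal H$ is the upper half plane, $e(x)=e^{2\pi i x}$, $K=\mathbb Q(i)$, $\mathcal O_K=\mathbb Z[i]$, $\mathcal O_K^\times=\{\pm1,\pm i\}$, $N(x)=x\bar x$, $\mathcal O_K^\sharp=\frac i2\mathcal O_K$. $J_{k,m}$ is the space of classical (Eichler–Zagier) Jacobi forms of weight $k$, index $m$. For $\psi$ on $\mathcal H\times\mathbb C^2$ and $\epsilon\in\mathcal O_K^\times$, $(\psi|_k\epsilon I)(\tau,z_1,z_2)=\epsilon^{-k}\psi(\tau,\epsilon z_1,\bar\epsilon z_2)$. For $\epsilon\in\mathcal O_K^\times$, $M=\begin{pmatrix}a&b\\c&d\end{pmatrix}\in SL(2,\mathbb Z)$: $(\phi|_{k,m}\epsilon M)(\tau,z_1,z_2)=\epsilon^{-k}(c\tau+d)^{-k}e^{-2\pi i m c z_1z_2/(c\tau+d)}\phi\bigl(M\tau,\tfrac{\epsilon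 z_1}{c\tau+d},\tfrac{\bar\epsilon z_2}{c\tau+d}\bigr)$; for $\lambda,\mu\in\mathcal O_K$, $(\phi|_m[\lambda,\mu])(\tau,z_1,z_2)=e^{2\pi i m(N(\lambda)\tau+\bar\lambda z_1+\lambda z_2)}\phi(\tau,z_1+\lambda\tau+\mu,z_2+\bar\lambda\tau+\bar\mu)$. $J_{k,m}(\mathcal O_K)$ (resp. $J^1_{k,m}(\mathcal O_K)$) is the space of holomorphic $\phi$ on $\mathcal H\times\mathbb C^2$ with $\phi|_{k,m}\epsilon M=\phi$ for all $\epsilon\in\mathcal O_K^\times$ (resp. only $\epsilon=1$) and all $M\in SL(2,\mathbb Z)$, $\phi|_m[\lambda,\mu]=\phi$ for all $\lambda,\mu\in\mathcal O_K$, and with a Fourier expansion $\sum_{n\ge0}\sum_{r\in\mathcal O_K^\sharp,\,nm\ge N(r)}c_\phi(n,r)e(n\tau+rz_1+\bar rz_2)$; cusp forms are those with $c_\phi(n,r)=0$ whenever $nm=N(r)$. For $\phi_1\in J_{k_1,m}$, $\phi_2\in J_{k_2,m}$, $H(\phi_1,\phi_2)(\tau,z_1,z_2)=\sum_{\epsilon\in\mathcal O_K^\times}\bigl(\phi_1(\tau,\frac12(z_1+z_2))\phi_2(\tau,\frac i2(z_1-z_2))\bigr)|_{k_1+k_2}\epsilon I$. *)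

theory Defs
  imports "HOL-Analysis.Analysis"
begin

definition e2pi :: "complex \<Rightarrow> complex" where
  "e2pi x = exp (2 * of_real pi * \<i> * x)"

definition holo2 :: "(complex \<times> complex \<Rightarrow> complex) \<Rightarrow> (complex \<times> complex) set \<Rightarrow> bool" where
  "holo2 f U \<longleftrightarrow> (\<forall>x\<in>U. \<exists>a b. (f has_derivative (\<lambda>h. a * fst h + b * snd h)) (at x))"

definition holo3 :: "(complex \<times> complex \<times> complex \<Rightarrow> complex) \<Rightarrow> (complex \<times> complex \<times> complex) set \<Rightarrow> bool" where
  "holo3 f U \<longleftrightarrow> (\<forall>x\<in>U. \<exists>a b c.
      (f has_derivative (\<lambda>h. a * fst h + b * fst (snd h) + c * snd (snd h))) (at x))"

definition SL2Z :: "int \<Rightarrow> int \<Rightarrow> int \<Rightarrow> int \<Rightarrow> bool" where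
  "SL2Z a b c d \<longleftrightarrow> a * d - b * c = 1"

definition mob :: "int \<Rightarrow> int \<Rightarrow> int \<Rightarrow> int \<Rightarrow> complex \<Rightarrow> complex" where
  "mob a b c d \<tau> = (of_int a * \<tau> + of_int b) / (of_int c * \<tau> + of_int d)"

definition slashJ :: "nat \<Rightarrow> nat \<Rightarrow> int \<Rightarrow> int \<Rightarrow> int \<Rightarrow> int \<Rightarrow>
    (complex \<Rightarrow> complex \<Rightarrow> complex) \<Rightarrow> complex \<Rightarrow> complex \<Rightarrow> complex" where
  "slashJ k m a b c d \<phi> \<tau> z =
     inverse ((of_int c * \<tau> + of_int d) ^ k)
     * e2pi (- of_nat m * of_int c * z ^ 2 / (of_int c * \<tau> + of_int d))
     * \<phi> (mob a b c d \<tau>) (z / (of_int c * \<tau> + of_int d))"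

definition ellJ :: "nat \<Rightarrow> int \<Rightarrow> int \<Rightarrow> (complex \<Rightarrow> complex \<Rightarrow> complex) \<Rightarrow> complex \<Rightarrow> complex \<Rightarrow> complex" where
  "ellJ m l \<mu> \<phi> \<tau> z =
     e2pi (of_nat m * (of_int l ^ 2 * \<tau> + 2 * of_int l * z)) * \<phi> \<tau> (z + of_int l * \<tau> + of_int \<mu>)"

definition fourierJ :: "nat \<Rightarrow> (complex \<Rightarrow> complex \<Rightarrow> complex) \<Rightarrow> (nat \<Rightarrow> int \<Rightarrow> complex) \<Rightarrow> bool" where
  "fourierJ m \<phi> c \<longleftrightarrow> (\<forall>\<tau> z. Im \<tau> > 0 \<longrightarrow>
     ((\<lambda>(n, r). c n r * e2pi (of_nat n * \<tau> + of_int r * z)) has_sum \<phi> \<tau> z)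
       {(n, r). r ^ 2 \<le> 4 * int n * int m})"

definition Jac :: "nat \<Rightarrow> nat \<Rightarrow> (complex \<Rightarrow> complex \<Rightarrow> complex) set" where
  "Jac k m = {\<phi>. holo2 (\<lambda>p. \<phi> (fst p) (snd p)) {p. Im (fst p) > 0}
     \<and> (\<forall>a b c d. SL2Z a b c d \<longrightarrow> (\<forall>\<tau> z. Im \<tau> > 0 \<longrightarrow> slashJ k m a b c d \<phi> \<tau> z = \<phi> \<tau> z))
     \<and> (\<forall>l \<mu> \<tau> z. Im \<tau> > 0 \<longrightarrow> ellJ m l \<mu> \<phi> \<tau> z = \<phi> \<tau> z)
     \<and> (\<exists>c. fourierJ m \<phi> c)}"

definition JacCusp :: "nat \<Rightarrow> nat \<Rightarrow> (complex \<Rightarrow> complex \<Rightarrow> complex) set" where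
  "JacCusp k m = {\<phi> \<in> Jac k m. \<exists>c. fourierJ m \<phi> c
     \<and> (\<forall>n r. r ^ 2 = 4 * int n * int m \<longrightarrow> c n r = 0)}"

definition UK :: "complex set" where
  "UK = {1, -1, \<i>, -\<i>}"

definition gauss :: "int \<Rightarrow> int \<Rightarrow> complex" where
  "gauss a b = of_int a + \<i> * of_int b"

definition slashEI :: "nat \<Rightarrow> complex \<Rightarrow> (complex \<Rightarrow> complex \<Rightarrow> complex \<Rightarrow> complex)
    \<Rightarrow> complex \<Rightarrow> complex \<Rightarrow> complex \<Rightarrow> complex" where
  "slashEI k \<epsilon> \<psi> \<tau> z1 z2 = inverse (\<epsilon> ^ k) * \<psi> \<tau> (\<epsilon> * z1) (cnj \<epsilon> * z2)"

definition slashK :: "nat \<Rightarrow> nat \<Rightarrow> complex \<Rightarrow> int \<Rightarrow> int \<Rightarrow> int \<Rightarrow> int \<Rightarrow>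
    (complex \<Rightarrow> complex \<Rightarrow> complex \<Rightarrow> complex) \<Rightarrow> complex \<Rightarrow> complex \<Rightarrow> complex \<Rightarrow> complex" where
  "slashK k m \<epsilon> a b c d \<phi> \<tau> z1 z2 =
     inverse (\<epsilon> ^ k) * inverse ((of_int c * \<tau> + of_int d) ^ k)
     * e2pi (- of_nat m * of_int c * z1 * z2 / (of_int c * \<tau> + of_int d))
     * \<phi> (mob a b c d \<tau>) (\<epsilon> * z1 / (of_int c * \<tau> + of_int d)) (cnj \<epsilon> * z2 / (of_int c * \<tau> + of_int d))"

definition ellK :: "nat \<Rightarrow> complex \<Rightarrow> complex \<Rightarrow> (complex \<Rightarrow> complex \<Rightarrow> complex \<Rightarrow> complex)
    \<Rightarrow> complex \<Rightarrow> complex \<Rightarrow> complex \<Rightarrow> complex" where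
  "ellK m lam \<mu> \<phi> \<tau> z1 z2 =
     e2pi (of_nat m * (lam * cnj lam * \<tau> + cnj lam * z1 + lam * z2))
     * \<phi> \<tau> (z1 + lam * \<tau> + \<mu>) (z2 + cnj lam * \<tau> + cnj \<mu>)"

text \<open>Fourier expansion: r ranges over O_K^# = (i/2) Z[i] = {(a + b i)/2 | a b integers};
  N(r) = (a^2+b^2)/4, so n m >= N(r) iff a^2 + b^2 <= 4 n m.\<close>
definition fourierK :: "nat \<Rightarrow> (complex \<Rightarrow> complex \<Rightarrow> complex \<Rightarrow> complex) \<Rightarrow> (nat \<Rightarrow> int \<Rightarrow> int \<Rightarrow> complex) \<Rightarrow> bool" where
  "fourierK m \<phi> c \<longleftrightarrow> (\<forall>\<tau> z1 z2. Im \<tau> > 0 \<longrightarrow>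
     ((\<lambda>(n, a, b). c n a b * e2pi (of_nat n * \<tau> + gauss a b / 2 * z1 + cnj (gauss a b / 2) * z2))
        has_sum \<phi> \<tau> z1 z2)
       {(n, a, b). a ^ 2 + b ^ 2 \<le> 4 * int n * int m})"

text \<open>Invariance under eps M for eps in E; E = UK gives J_{k,m}(O_K), E = {1} gives J^1_{k,m}(O_K).\<close>
definition JKgen :: "complex set \<Rightarrow> nat \<Rightarrow> nat \<Rightarrow> (complex \<Rightarrow> complex \<Rightarrow> complex \<Rightarrow> complex) set" where
  "JKgen E k m = {\<phi>. holo3 (\<lambda>p. \<phi> (fst p) (fst (snd p)) (snd (snd p))) {p. Im (fst p) > 0}
     \<and> (\<forall>\<epsilon>\<in>E. \<forall>a b c d. SL2Z a b c d \<longrightarrow>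
          (\<forall>\<tau> z1 z2. Im \<tau> > 0 \<longrightarrow> slashK k m \<epsilon> a b c d \<phi> \<tau> z1 z2 = \<phi> \<tau> z1 z2))
     \<and> (\<forall>l1 l2 u1 u2 \<tau> z1 z2. Im \<tau> > 0 \<longrightarrow>
          ellK m (gauss l1 l2) (gauss u1 u2) \<phi> \<tau> z1 z2 = \<phi> \<tau> z1 z2)
     \<and> (\<exists>c. fourierK m \<phi> c)}"

definition JK :: "nat \<Rightarrow> nat \<Rightarrow> (complex \<Rightarrow> complex \<Rightarrow> complex \<Rightarrow> complex) set" where
  "JK k m = JKgen UK k m"

definition J1K :: "nat \<Rightarrow> nat \<Rightarrow> (complex \<Rightarrow> complex \<Rightarrow> complex \<Rightarrow> complex) set" where
  "J1K k m = JKgen {1} k m"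

definition JKCusp :: "nat \<Rightarrow> nat \<Rightarrow> (complex \<Rightarrow> complex \<Rightarrow> complex \<Rightarrow> complex) set" where
  "JKCusp k m = {\<phi> \<in> JK k m. \<exists>c. fourierK m \<phi> c
     \<and> (\<forall>n a b. a ^ 2 + b ^ 2 = 4 * int n * int m \<longrightarrow> c n a b = 0)}"

definition LamK :: "nat \<Rightarrow> (complex \<Rightarrow> complex \<Rightarrow> complex \<Rightarrow> complex) \<Rightarrow> complex \<Rightarrow> complex \<Rightarrow> complex \<Rightarrow> complex" where
  "LamK k \<psi> = (\<lambda>\<tau> z1 z2. \<Sum>\<epsilon>\<in>UK. slashEI k \<epsilon> \<psi> \<tau> z1 z2)"

definition HK :: "nat \<Rightarrow> nat \<Rightarrow> (complex \<Rightarrow> complex \<Rightarrow> complex) \<Rightarrow> (complex \<Rightarrow> complex \<Rightarrow> complex)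
    \<Rightarrow> complex \<Rightarrow> complex \<Rightarrow> complex \<Rightarrow> complex" where
  "HK k1 k2 \<phi>1 \<phi>2 = (\<lambda>\<tau> z1 z2. \<Sum>\<epsilon>\<in>UK. slashEI (k1 + k2) \<epsilon>
       (\<lambda>t w1 w2. \<phi>1 t ((w1 + w2) / 2) * \<phi>2 t (\<i> * (w1 - w2) / 2)) \<tau> z1 z2)"

end

theory Submission
  imports Defs
begin
lemma has_sum_times:
  fixes f g :: "_ \<Rightarrow> complex"
  assumes f: "(f has_sum F) A" and g: "(g has_sum G) B"
  shows "((\<lambda>(x,y). f x * g y) has_sum F*G) (A \<times> B)"
proof (rule has_sum_SigmaI[where g="\<lambda>x. f x * G"])
  show "((\<lambda>y. case (x, y) of (x, y) \<Rightarrow> f x * g y) has_sum f x * G) B" if "x \<in> A" for x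
    using has_sum_cmult_right[OF g] by simp
  show "((\<lambda>x. f x * G) has_sum F * G) A" using has_sum_cmult_left[OF f] .
  have fa: "(\<lambda>x. norm (f x)) summable_on A" using f summable_on_iff_abs_summable_on_complex has_sum_imp_summable by blast
  have ga: "(\<lambda>x. norm (g x)) summable_on B" using g summable_on_iff_abs_summable_on_complex has_sum_imp_summable by blast
  have inner: "\<forall>x\<in>A. (\<lambda>y. norm (f x * g y)) summable_on B"
    using summable_on_cmult_right[OF ga] by (simp add: norm_mult)
  have e: "(\<Sum>\<^sub>\<infinity>y\<in>B. norm (f x * g y)) = norm (f x) * (\<Sum>\<^sub>\<infinity>y\<in>B. norm (g y))" for x
    by (simp add: norm_mult infsum_cmult_right')
  have "(\<lambda>x. norm (f x) * (\<Sum>\<^sub>\<infinity>y\<in>B. norm (g y))) summable_on A"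
    using summable_on_cmult_left[OF fa] by simp
  moreover have "norm (norm (f x) * (\<Sum>\<^sub>\<infinity>y\<in>B. norm (g y))) = norm (f x) * (\<Sum>\<^sub>\<infinity>y\<in>B. norm (g y))" for x
    by (simp add: infsum_nonneg)
  ultimately have outer: "(\<lambda>x. norm (\<Sum>\<^sub>\<infinity>y\<in>B. norm (f x * g y))) summable_on A"
    by (simp add: e)
  have "(\<lambda>p. norm ((\<lambda>(x,y). f x * g y) p)) summable_on A \<times> B"
    using Infinite_Sum.abs_summable_on_Sigma_iff[of "\<lambda>(x,y). f x * g y" A "\<lambda>_. B"] inner outer by simp
  then show "(\<lambda>(x,y). f x * g y) summable_on A \<times> B"
    using summable_on_iff_abs_summable_on_complex by blast
qed

lemma e2pi_add: "e2pi x * e2pi y = e2pi (x + y)"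
  by (simp add: e2pi_def distrib_left exp_add)

lemma cnj_gauss: "cnj (gauss a b) = of_int a - \<i> * of_int b"
  by (simp add: gauss_def)

definition conv :: "nat \<Rightarrow> (nat \<Rightarrow> int \<Rightarrow> complex) \<Rightarrow> (nat \<Rightarrow> int \<Rightarrow> complex) \<Rightarrow> nat \<Rightarrow> int \<Rightarrow> int \<Rightarrow> complex" where
  "conv m c1 c2 n a b = (\<Sum>n1\<in>{n1. n1 \<le> n \<and> a^2 \<le> 4 * int n1 * int m \<and> b^2 \<le> 4 * int (n - n1) * int m}.
      c1 n1 a * c2 (n - n1) b)"

lemma fourier_prod:
  assumes f1: "fourierJ m \<phi>1 c1" and f2: "fourierJ m \<phi>2 c2"
  shows "fourierK m (\<lambda>t w1 w2. \<phi>1 t ((w1 + w2) / 2) * \<phi>2 t (\<i> * (w1 - w2) / 2)) (conv m c1 c2)"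
  unfolding fourierK_def
proof (intro allI impI)
  fix \<tau> z1 z2 :: complex assume t: "Im \<tau> > 0"
  define u where "u = (z1 + z2) / 2"
  define v where "v = \<i> * (z1 - z2) / 2"
  define S1 where "S1 = {(n::nat, r::int). r ^ 2 \<le> 4 * int n * int m}"
  define S where "S = {(n::nat, a::int, b::int). a ^ 2 + b ^ 2 \<le> 4 * int n * int m}"
  define Fib where "Fib = (\<lambda>(n::nat, a::int, b::int). {n1. n1 \<le> n \<and> a^2 \<le> 4 * int n1 * int m \<and> b^2 \<le> 4 * int (n - n1) * int m})"
  define E where "E = (\<lambda>(n::nat, a::int, b::int). e2pi (of_nat n * \<tau> + gauss a b / 2 * z1 + cnj (gauss a b / 2) * z2))"
  have h1: "((\<lambda>(n, r). c1 n r * e2pi (of_nat n * \<tau> + of_int r * u)) has_sum \<phi>1 \<tau> u) S1"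
    using f1 t unfolding fourierJ_def S1_def by blast
  have h2: "((\<lambda>(n, r). c2 n r * e2pi (of_nat n * \<tau> + of_int r * v)) has_sum \<phi>2 \<tau> v) S1"
    using f2 t unfolding fourierJ_def S1_def by blast
  have hp: "((\<lambda>(x, y). (\<lambda>(n, r). c1 n r * e2pi (of_nat n * \<tau> + of_int r * u)) x *
                     (\<lambda>(n, r). c2 n r * e2pi (of_nat n * \<tau> + of_int r * v)) y)
        has_sum \<phi>1 \<tau> u * \<phi>2 \<tau> v) (S1 \<times> S1)"
    by (rule has_sum_times[OF h1 h2])
  have Eid: "e2pi (of_nat n1 * \<tau> + of_int a * u) * e2pi (of_nat n2 * \<tau> + of_int b * v)
      = E (n1 + n2, a, b)" for n1 n2 a b
    unfolding E_def e2pi_add u_def v_def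
    by (simp, rule arg_cong[where f=e2pi], simp add: cnj_gauss gauss_def field_simps)
  have hs: "((\<lambda>((n,a,b), n1). c1 n1 a * c2 (n - n1) b * E (n,a,b)) has_sum \<phi>1 \<tau> u * \<phi>2 \<tau> v) (Sigma S Fib)"
  proof -
    have "((\<lambda>(x, y). (\<lambda>(n, r). c1 n r * e2pi (of_nat n * \<tau> + of_int r * u)) x *
                     (\<lambda>(n, r). c2 n r * e2pi (of_nat n * \<tau> + of_int r * v)) y)
        has_sum \<phi>1 \<tau> u * \<phi>2 \<tau> v) (S1 \<times> S1) =
        ((\<lambda>((n,a,b), n1). c1 n1 a * c2 (n - n1) b * E (n,a,b)) has_sum \<phi>1 \<tau> u * \<phi>2 \<tau> v) (Sigma S Fib)"
      apply (rule has_sum_reindex_bij_witness[where j="\<lambda>((n1,a),(n2,b)). ((n1+n2,a,b),n1)"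
          and i="\<lambda>((n,a,b),n1). ((n1,a),(n-n1,b))"])
      apply (auto simp: S1_def S_def Fib_def ring_distribs)[4]
      apply (auto simp: Eid[symmetric])[1]
      apply simp
      done
    with hp show ?thesis by simp
  qed
  have fin: "finite (Fib x)" for x
    unfolding Fib_def by (cases x) auto
  have "((\<lambda>x. \<Sum>n1\<in>Fib x. (\<lambda>((n,a,b), n1). c1 n1 a * c2 (n - n1) b * E (n,a,b)) (x, n1)) has_sum \<phi>1 \<tau> u * \<phi>2 \<tau> v) S"
    by (rule has_sum_Sigma'[OF hs]) (simp add: fin)
  moreover have "(\<Sum>n1\<in>Fib x. (\<lambda>((n,a,b), n1). c1 n1 a * c2 (n - n1) b * E (n,a,b)) (x, n1))
     = (\<lambda>(n, a, b). conv m c1 c2 n a b * e2pi (of_nat n * \<tau> + gauss a b / 2 * z1 + cnj (gauss a b / 2) * z2)) x" for x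
    by (cases x) (simp add: conv_def Fib_def E_def sum_distrib_right)
  ultimately show "((\<lambda>(n, a, b). conv m c1 c2 n a b * e2pi (of_nat n * \<tau> + gauss a b / 2 * z1 + cnj (gauss a b / 2) * z2)) has_sum
          \<phi>1 \<tau> ((z1 + z2) / 2) * \<phi>2 \<tau> (\<i> * (z1 - z2) / 2)) {(n, a, b). a\<^sup>2 + b\<^sup>2 \<le> 4 * int n * int m}"
    by (simp add: u_def v_def S_def)
qed

lemma conv_cusp:
  assumes "\<forall>n r. r ^ 2 = 4 * int n * int m \<longrightarrow> c1 n r = 0"
      and "\<forall>n r. r ^ 2 = 4 * int n * int m \<longrightarrow> c2 n r = 0"
      and "a ^ 2 + b ^ 2 = 4 * int n * int m"
  shows "conv m c1 c2 n a b = 0"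
  unfolding conv_def
proof (rule sum.neutral, safe)
  fix n1 assume h: "n1 \<le> n" "a\<^sup>2 \<le> 4 * int n1 * int m" "b\<^sup>2 \<le> 4 * int (n - n1) * int m"
  have "int (n - n1) = int n - int n1" using h(1) by simp
  then have "a\<^sup>2 = 4 * int n1 * int m" using h assms(3) by (simp add: algebra_simps)
  then show "c1 n1 a * c2 (n - n1) b = 0" using assms(1) by simp
qed

definition rotI :: "complex \<Rightarrow> int \<times> int \<Rightarrow> int \<times> int" where
  "rotI e = (\<lambda>(a, b). (a * \<lfloor>Re e\<rfloor> - b * \<lfloor>Im e\<rfloor>, a * \<lfloor>Im e\<rfloor> + b * \<lfloor>Re e\<rfloor>))"

lemma floor_m1 [simp]: "\<lfloor>- (1::real)\<rfloor> = - 1"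
  by (metis floor_of_int of_int_1 of_int_minus)

lemma UK_cases: "e \<in> UK \<Longrightarrow> e = 1 \<or> e = -1 \<or> e = \<i> \<or> e = -\<i>"
  by (simp add: UK_def)

lemma UK_cnj: "e \<in> UK \<Longrightarrow> cnj e \<in> UK"
  by (auto simp: UK_def)

lemma UK_unit: "e \<in> UK \<Longrightarrow> e * cnj e = 1"
  by (auto simp: UK_def)

lemma UK_unit': "e \<in> UK \<Longrightarrow> cnj e * e = 1"
  by (auto simp: UK_def)

lemma UK_nz: "e \<in> UK \<Longrightarrow> e \<noteq> 0"
  by (auto simp: UK_def)

lemma UK_mult: "e \<in> UK \<Longrightarrow> f \<in> UK \<Longrightarrow> e * f \<in> UK"
  by (auto simp: UK_def)

lemma gauss_rotI: "e \<in> UK \<Longrightarrow> gauss (fst (rotI e (a,b))) (snd (rotI e (a,b))) = e * gauss a b"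
  by (drule UK_cases) (auto simp: rotI_def gauss_def algebra_simps)

lemma rotI_sq: "e \<in> UK \<Longrightarrow> (fst (rotI e (a,b)))^2 + (snd (rotI e (a,b)))^2 = a^2 + b^2"
  by (drule UK_cases) (auto simp: rotI_def algebra_simps power2_eq_square)

lemma rotI_sq': "e \<in> UK \<Longrightarrow> rotI e (a,b) = (a', b') \<Longrightarrow> a'^2 + b'^2 = a^2 + b^2"
  using rotI_sq[of e a b] by simp

lemma rotI_inv: "e \<in> UK \<Longrightarrow> rotI (cnj e) (rotI e p) = p"
  by (drule UK_cases) (auto simp: rotI_def split: prod.splits)

lemma fourier_slashEI:
  assumes e: "e \<in> UK" and f: "fourierK m \<psi> c"
  shows "fourierK m (slashEI k e \<psi>) (\<lambda>n a b. inverse (e ^ k) * c n (fst (rotI (cnj e) (a,b))) (snd (rotI (cnj e) (a,b))))"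
  unfolding fourierK_def
proof (intro allI impI)
  fix \<tau> z1 z2 :: complex assume t: "Im \<tau> > 0"
  define S where "S = {(n::nat, a::int, b::int). a ^ 2 + b ^ 2 \<le> 4 * int n * int m}"
  have h: "((\<lambda>(n, a, b). c n a b * e2pi (of_nat n * \<tau> + gauss a b / 2 * (e * z1) + cnj (gauss a b / 2) * (cnj e * z2)))
        has_sum \<psi> \<tau> (e * z1) (cnj e * z2)) S"
    using f t unfolding fourierK_def S_def by blast
  have h2: "((\<lambda>x. inverse (e ^ k) * (\<lambda>(n, a, b). c n a b * e2pi (of_nat n * \<tau> + gauss a b / 2 * (e * z1) + cnj (gauss a b / 2) * (cnj e * z2))) x)
        has_sum inverse (e ^ k) * \<psi> \<tau> (e * z1) (cnj e * z2)) S"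
    by (rule has_sum_cmult_right[OF h])
  have ce: "cnj e \<in> UK" using e by (rule UK_cnj)
  have "((\<lambda>x. inverse (e ^ k) * (\<lambda>(n, a, b). c n a b * e2pi (of_nat n * \<tau> + gauss a b / 2 * (e * z1) + cnj (gauss a b / 2) * (cnj e * z2))) x)
        has_sum inverse (e ^ k) * \<psi> \<tau> (e * z1) (cnj e * z2)) S
     = ((\<lambda>(n, a, b). inverse (e ^ k) * c n (fst (rotI (cnj e) (a,b))) (snd (rotI (cnj e) (a,b))) *
            e2pi (of_nat n * \<tau> + gauss a b / 2 * z1 + cnj (gauss a b / 2) * z2))
        has_sum inverse (e ^ k) * \<psi> \<tau> (e * z1) (cnj e * z2)) S"
    apply (rule has_sum_reindex_bij_witness[where j="\<lambda>(n,p). (n, rotI e p)" and i="\<lambda>(n,p). (n, rotI (cnj e) p)"])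
    using e ce rotI_inv[OF e] rotI_inv[OF ce] 
        apply (auto simp: S_def case_prod_beta rotI_sq[OF e] rotI_sq[OF ce] rotI_inv[OF e] rotI_inv[OF ce])[4]
    subgoal for x
      using rotI_inv[OF e] gauss_rotI[OF e] UK_unit[OF e] UK_unit'[OF e]
      apply (cases x)
      apply (clarsimp simp: case_prod_beta gauss_rotI[OF e] rotI_inv[OF e])
      apply (simp add: algebra_simps)
      done
    by simp
  with h2 show "((\<lambda>(n, a, b). inverse (e ^ k) * c n (fst (rotI (cnj e) (a,b))) (snd (rotI (cnj e) (a,b))) *
            e2pi (of_nat n * \<tau> + gauss a b / 2 * z1 + cnj (gauss a b / 2) * z2))
        has_sum slashEI k e \<psi> \<tau> z1 z2) {(n, a, b). a\<^sup>2 + b\<^sup>2 \<le> 4 * int n * int m}"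
    by (simp add: slashEI_def S_def)
qed

lemma chain_at: "(f has_derivative f') (at x) \<Longrightarrow> (g has_derivative g') (at (f x)) \<Longrightarrow>
   ((\<lambda>y. g (f y)) has_derivative (\<lambda>h. g' (f' h))) (at x)"
  using diff_chain_at[of f f' x g g'] by (simp add: o_def)

definition UH3 :: "(complex \<times> complex \<times> complex) set" where "UH3 = {p. Im (fst p) > 0}"

lemma holo3_add:
  assumes "holo3 f U" "holo3 g U" shows "holo3 (\<lambda>p. f p + g p) U"
  unfolding holo3_def
proof
  fix x assume "x \<in> U"
  then obtain a b c a' b' c' where
    "(f has_derivative (\<lambda>h. a * fst h + b * fst (snd h) + c * snd (snd h))) (at x)"
    "(g has_derivative (\<lambda>h. a' * fst h + b' * fst (snd h) + c' * snd (snd h))) (at x)"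
    using assms unfolding holo3_def by blast
  from has_derivative_add[OF this] show "\<exists>a b c. ((\<lambda>p. f p + g p) has_derivative (\<lambda>h. a * fst h + b * fst (snd h) + c * snd (snd h))) (at x)"
    by (intro exI[of _ "a+a'"] exI[of _ "b+b'"] exI[of _ "c+c'"]) (erule has_derivative_eq_rhs, auto simp: algebra_simps)
qed

lemma holo3_cmult:
  assumes "holo3 f U" shows "holo3 (\<lambda>p. s * f p) U"
  unfolding holo3_def
proof
  fix x assume "x \<in> U"
  then obtain a b c where
    "(f has_derivative (\<lambda>h. a * fst h + b * fst (snd h) + c * snd (snd h))) (at x)"
    using assms unfolding holo3_def by blast
  from has_derivative_mult_right[OF this, of s] show "\<exists>a b c. ((\<lambda>p. s * f p) has_derivative (\<lambda>h. a * fst h + b * fst (snd h) + c * snd (snd h))) (at x)"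
    by (intro exI[of _ "s*a"] exI[of _ "s*b"] exI[of _ "s*c"]) (erule has_derivative_eq_rhs, auto simp: algebra_simps)
qed

lemma holo3_zero: "holo3 (\<lambda>p. 0) U"
  unfolding holo3_def by (auto intro!: exI[of _ 0])

lemma holo3_sum:
  assumes "finite A" "\<And>e. e \<in> A \<Longrightarrow> holo3 (F e) U"
  shows "holo3 (\<lambda>p. \<Sum>e\<in>A. F e p) U"
  using assms by (induction A rule: finite_induct) (auto intro: holo3_zero holo3_add)

lemma holo3_slashEI:
  assumes h: "holo3 (\<lambda>p. \<psi> (fst p) (fst (snd p)) (snd (snd p))) UH3"
  shows "holo3 (\<lambda>p. slashEI k e \<psi> (fst p) (fst (snd p)) (snd (snd p))) UH3"
  unfolding holo3_def
proof
  fix x :: "complex \<times> complex \<times> complex" assume x: "x \<in> UH3"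
  define L where "L = (\<lambda>p::complex \<times> complex \<times> complex. (fst p, e * fst (snd p), cnj e * snd (snd p)))"
  have L: "(L has_derivative L) (at x)"
    unfolding L_def by (auto intro!: derivative_eq_intros)
  have "L x \<in> UH3" using x by (simp add: L_def UH3_def)
  then obtain a b c where
    d: "((\<lambda>p. \<psi> (fst p) (fst (snd p)) (snd (snd p))) has_derivative (\<lambda>h. a * fst h + b * fst (snd h) + c * snd (snd h))) (at (L x))"
    using h unfolding holo3_def by blast
  have "((\<lambda>y. inverse (e ^ k) * (\<lambda>p. \<psi> (fst p) (fst (snd p)) (snd (snd p))) (L y)) has_derivative
      (\<lambda>h. inverse (e ^ k) * (\<lambda>h. a * fst h + b * fst (snd h) + c * snd (snd h)) (L h))) (at x)"
    by (rule has_derivative_mult_right[OF chain_at[OF L d]])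
  then have "((\<lambda>p. slashEI k e \<psi> (fst p) (fst (snd p)) (snd (snd p))) has_derivative
      (\<lambda>h. inverse (e ^ k) * (\<lambda>h. a * fst h + b * fst (snd h) + c * snd (snd h)) (L h))) (at x)"
    by (simp add: slashEI_def L_def)
  then show "\<exists>a b c. ((\<lambda>p. slashEI k e \<psi> (fst p) (fst (snd p)) (snd (snd p))) has_derivative (\<lambda>h. a * fst h + b * fst (snd h) + c * snd (snd h))) (at x)"
    by (intro exI[of _ "inverse (e ^ k) * a"] exI[of _ "inverse (e ^ k) * b * e"] exI[of _ "inverse (e ^ k) * c * cnj e"])
      (erule has_derivative_eq_rhs, auto simp: L_def algebra_simps)
qed

definition Pf :: "(complex \<Rightarrow> complex \<Rightarrow> complex) \<Rightarrow> (complex \<Rightarrow> complex \<Rightarrow> complex) \<Rightarrow> complex \<Rightarrow> complex \<Rightarrow> complex \<Rightarrow> complex" where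
  "Pf \<phi>1 \<phi>2 = (\<lambda>t w1 w2. \<phi>1 t ((w1 + w2) / 2) * \<phi>2 t (\<i> * (w1 - w2) / 2))"

lemma holo3_Pf:
  assumes h1: "holo2 (\<lambda>p. \<phi>1 (fst p) (snd p)) {p. Im (fst p) > 0}"
      and h2: "holo2 (\<lambda>p. \<phi>2 (fst p) (snd p)) {p. Im (fst p) > 0}"
  shows "holo3 (\<lambda>p. Pf \<phi>1 \<phi>2 (fst p) (fst (snd p)) (snd (snd p))) UH3"
  unfolding holo3_def
proof
  fix x :: "complex \<times> complex \<times> complex" assume x: "x \<in> UH3"
  define M1 where "M1 = (\<lambda>p::complex \<times> complex \<times> complex. (fst p, (fst (snd p) + snd (snd p)) / 2))"
  define M2 where "M2 = (\<lambda>p::complex \<times> complex \<times> complex. (fst p, \<i> * (fst (snd p) - snd (snd p)) / 2))"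
  have L1: "(M1 has_derivative M1) (at x)"
    unfolding M1_def by (auto intro!: derivative_eq_intros simp: add_divide_distrib)
  have L2: "(M2 has_derivative M2) (at x)"
    unfolding M2_def by (auto intro!: derivative_eq_intros simp: diff_divide_distrib right_diff_distrib)
  have "M1 x \<in> {p. Im (fst p) > 0}" "M2 x \<in> {p. Im (fst p) > 0}" using x by (auto simp: M1_def M2_def UH3_def)
  then obtain a1 b1 a2 b2 where
    d1: "((\<lambda>p. \<phi>1 (fst p) (snd p)) has_derivative (\<lambda>h. a1 * fst h + b1 * snd h)) (at (M1 x))" and
    d2: "((\<lambda>p. \<phi>2 (fst p) (snd p)) has_derivative (\<lambda>h. a2 * fst h + b2 * snd h)) (at (M2 x))"
    using h1 h2 unfolding holo2_def by blast
  define F1 where "F1 = \<phi>1 (fst (M1 x)) (snd (M1 x))"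
  define F2 where "F2 = \<phi>2 (fst (M2 x)) (snd (M2 x))"
  have "((\<lambda>y. (\<lambda>p. \<phi>1 (fst p) (snd p)) (M1 y) * (\<lambda>p. \<phi>2 (fst p) (snd p)) (M2 y)) has_derivative
      (\<lambda>h. F1 * (\<lambda>h. a2 * fst h + b2 * snd h) (M2 h) + (\<lambda>h. a1 * fst h + b1 * snd h) (M1 h) * F2)) (at x)"
    unfolding F1_def F2_def by (rule has_derivative_mult[OF chain_at[OF L1 d1] chain_at[OF L2 d2]])
  then have "((\<lambda>p. Pf \<phi>1 \<phi>2 (fst p) (fst (snd p)) (snd (snd p))) has_derivative
      (\<lambda>h. F1 * (\<lambda>h. a2 * fst h + b2 * snd h) (M2 h) + (\<lambda>h. a1 * fst h + b1 * snd h) (M1 h) * F2)) (at x)"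
    by (simp add: Pf_def M1_def M2_def)
  then show "\<exists>a b c. ((\<lambda>p. Pf \<phi>1 \<phi>2 (fst p) (fst (snd p)) (snd (snd p))) has_derivative (\<lambda>h. a * fst h + b * fst (snd h) + c * snd (snd h))) (at x)"
    by (intro exI[of _ "F1 * a2 + a1 * F2"] exI[of _ "F1 * b2 * \<i> / 2 + b1 * F2 / 2"] exI[of _ "- F1 * b2 * \<i> / 2 + b1 * F2 / 2"])
      (erule has_derivative_eq_rhs, auto simp: M1_def M2_def algebra_simps add_divide_distrib diff_divide_distrib)
qed

lemma Jac_slash: "\<phi> \<in> Jac k m \<Longrightarrow> SL2Z a b c d \<Longrightarrow> Im \<tau> > 0 \<Longrightarrow>
  \<phi> \<tau> z = inverse ((of_int c * \<tau> + of_int d) ^ k)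
     * e2pi (- of_nat m * of_int c * z ^ 2 / (of_int c * \<tau> + of_int d))
     * \<phi> (mob a b c d \<tau>) (z / (of_int c * \<tau> + of_int d))"
  unfolding Jac_def slashJ_def by auto

lemma Pf_slash:
  assumes p1: "\<phi>1 \<in> Jac k1 m" and p2: "\<phi>2 \<in> Jac k2 m" and sl: "SL2Z a b c d" and t: "Im \<tau> > 0"
  shows "slashK (k1 + k2) m 1 a b c d (Pf \<phi>1 \<phi>2) \<tau> z1 z2 = Pf \<phi>1 \<phi>2 \<tau> z1 z2"
proof -
  define j where "j = of_int c * \<tau> + of_int d"
  define u where "u = (z1 + z2) / 2"
  define v where "v = \<i> * (z1 - z2) / 2"
  have num: "- of_nat m * of_int c * u ^ 2 + - of_nat m * of_int c * v ^ 2 = - of_nat m * of_int c * z1 * z2"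
    unfolding u_def v_def by (simp add: power2_eq_square field_simps)
  have ex: "e2pi (- of_nat m * of_int c * u ^ 2 / j) * e2pi (- of_nat m * of_int c * v ^ 2 / j)
      = e2pi (- of_nat m * of_int c * z1 * z2 / j)"
    unfolding e2pi_add add_divide_distrib[symmetric] num ..
  have a1: "(z1 / j + z2 / j) / 2 = u / j" unfolding u_def by (simp add: add_divide_distrib mult.commute)
  have a2: "\<i> * (z1 / j - z2 / j) / 2 = v / j" unfolding v_def by (simp add: diff_divide_distrib right_diff_distrib mult.commute)
  have "Pf \<phi>1 \<phi>2 \<tau> z1 z2 = \<phi>1 \<tau> u * \<phi>2 \<tau> v" by (simp add: Pf_def u_def v_def)
  also have "\<dots> = (inverse (j ^ k1) * e2pi (- of_nat m * of_int c * u ^ 2 / j) * \<phi>1 (mob a b c d \<tau>) (u / j))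
        * (inverse (j ^ k2) * e2pi (- of_nat m * of_int c * v ^ 2 / j) * \<phi>2 (mob a b c d \<tau>) (v / j))"
    using Jac_slash[OF p1 sl t, of u] Jac_slash[OF p2 sl t, of v] by (simp add: j_def)
  also have "\<dots> = inverse (j ^ (k1 + k2)) * (e2pi (- of_nat m * of_int c * u ^ 2 / j) * e2pi (- of_nat m * of_int c * v ^ 2 / j))
        * \<phi>1 (mob a b c d \<tau>) (u / j) * \<phi>2 (mob a b c d \<tau>) (v / j)"
    by (simp add: power_add inverse_mult_distrib algebra_simps)
  also have "\<dots> = slashK (k1 + k2) m 1 a b c d (Pf \<phi>1 \<phi>2) \<tau> z1 z2"
    unfolding ex by (simp add: slashK_def Pf_def j_def[symmetric] a1 a2)
  finally show ?thesis ..
qed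

lemma Jac_ell: "\<phi> \<in> Jac k m \<Longrightarrow> Im \<tau> > 0 \<Longrightarrow>
  \<phi> \<tau> z = e2pi (of_nat m * (of_int l ^ 2 * \<tau> + 2 * of_int l * z)) * \<phi> \<tau> (z + of_int l * \<tau> + of_int \<mu>)"
  unfolding Jac_def ellJ_def by auto

lemma Pf_ell:
  assumes p1: "\<phi>1 \<in> Jac k1 m" and p2: "\<phi>2 \<in> Jac k2 m" and t: "Im \<tau> > 0"
  shows "ellK m (gauss l1 l2) (gauss u1 u2) (Pf \<phi>1 \<phi>2) \<tau> z1 z2 = Pf \<phi>1 \<phi>2 \<tau> z1 z2"
proof -
  define u where "u = (z1 + z2) / 2"
  define v where "v = \<i> * (z1 - z2) / 2"
  have A1: "((z1 + gauss l1 l2 * \<tau> + gauss u1 u2) + (z2 + cnj (gauss l1 l2) * \<tau> + cnj (gauss u1 u2))) / 2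
      = u + of_int l1 * \<tau> + of_int u1"
    unfolding u_def by (simp add: cnj_gauss gauss_def field_simps)
  have A2: "\<i> * ((z1 + gauss l1 l2 * \<tau> + gauss u1 u2) - (z2 + cnj (gauss l1 l2) * \<tau> + cnj (gauss u1 u2))) / 2
      = v + of_int (- l2) * \<tau> + of_int (- u2)"
    unfolding v_def by (simp add: cnj_gauss gauss_def field_simps)
  have EX: "e2pi (of_nat m * (of_int l1 ^ 2 * \<tau> + 2 * of_int l1 * u)) * e2pi (of_nat m * (of_int (- l2) ^ 2 * \<tau> + 2 * of_int (- l2) * v))
     = e2pi (of_nat m * (gauss l1 l2 * cnj (gauss l1 l2) * \<tau> + cnj (gauss l1 l2) * z1 + gauss l1 l2 * z2))"
    unfolding e2pi_add u_def v_def
    by (rule arg_cong[where f=e2pi], simp add: cnj_gauss gauss_def field_simps power2_eq_square)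
  have "Pf \<phi>1 \<phi>2 \<tau> z1 z2 = \<phi>1 \<tau> u * \<phi>2 \<tau> v" by (simp add: Pf_def u_def v_def)
  also have "\<dots> = e2pi (of_nat m * (of_int l1 ^ 2 * \<tau> + 2 * of_int l1 * u)) * \<phi>1 \<tau> (u + of_int l1 * \<tau> + of_int u1)
      * (e2pi (of_nat m * (of_int (- l2) ^ 2 * \<tau> + 2 * of_int (- l2) * v)) * \<phi>2 \<tau> (v + of_int (- l2) * \<tau> + of_int (- u2)))"
    using Jac_ell[OF p1 t, of u l1 u1] Jac_ell[OF p2 t, of v "- l2" "- u2"] by simp
  also have "\<dots> = ellK m (gauss l1 l2) (gauss u1 u2) (Pf \<phi>1 \<phi>2) \<tau> z1 z2"
    unfolding ellK_def Pf_def A1 A2 EX[symmetric] by (simp add: algebra_simps)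
  finally show ?thesis ..
qed

lemma Pf_J1K:
  assumes p1: "\<phi>1 \<in> Jac k1 m" and p2: "\<phi>2 \<in> Jac k2 m"
  shows "Pf \<phi>1 \<phi>2 \<in> J1K (k1 + k2) m"
proof -
  obtain c1 where c1: "fourierJ m \<phi>1 c1" using p1 by (auto simp: Jac_def)
  obtain c2 where c2: "fourierJ m \<phi>2 c2" using p2 by (auto simp: Jac_def)
  have h: "holo3 (\<lambda>p. Pf \<phi>1 \<phi>2 (fst p) (fst (snd p)) (snd (snd p))) UH3"
    using p1 p2 unfolding Jac_def by (intro holo3_Pf) auto
  have f: "fourierK m (Pf \<phi>1 \<phi>2) (conv m c1 c2)"
    using fourier_prod[OF c1 c2] by (simp add: Pf_def)
  show ?thesis
    unfolding J1K_def JKgen_def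
    using h f Pf_slash[OF p1 p2] Pf_ell[OF p1 p2] by (auto simp: UH3_def)
qed

lemma has_sum_finsum:
  fixes f :: "_ \<Rightarrow> _ \<Rightarrow> complex"
  assumes "finite I" "\<And>i. i \<in> I \<Longrightarrow> (f i has_sum s i) A"
  shows "((\<lambda>x. \<Sum>i\<in>I. f i x) has_sum (\<Sum>i\<in>I. s i)) A"
  using assms
proof (induction I rule: finite_induct)
  case (insert x F)
  have "((\<lambda>y. f x y + (\<Sum>i\<in>F. f i y)) has_sum (s x + (\<Sum>i\<in>F. s i))) A"
    using insert by (intro has_sum_add) auto
  then show ?case using insert by simp
qed simp

lemma finite_UK: "finite UK" by (simp add: UK_def)

lemma fourier_LamK:
  assumes f: "fourierK m \<psi> c"
  shows "fourierK m (LamK k \<psi>) (\<lambda>n a b. \<Sum>e\<in>UK. inverse (e ^ k) * c n (fst (rotI (cnj e) (a,b))) (snd (rotI (cnj e) (a,b))))"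
  unfolding fourierK_def
proof (intro allI impI)
  fix \<tau> z1 z2 :: complex assume t: "Im \<tau> > 0"
  have "((\<lambda>x. \<Sum>e\<in>UK. (\<lambda>(n, a, b). inverse (e ^ k) * c n (fst (rotI (cnj e) (a,b))) (snd (rotI (cnj e) (a,b))) *
            e2pi (of_nat n * \<tau> + gauss a b / 2 * z1 + cnj (gauss a b / 2) * z2)) x)
      has_sum (\<Sum>e\<in>UK. slashEI k e \<psi> \<tau> z1 z2)) {(n, a, b). a ^ 2 + b ^ 2 \<le> 4 * int n * int m}"
    using fourier_slashEI[OF _ f] t unfolding fourierK_def
    by (intro has_sum_finsum finite_UK) auto
  moreover have eq: "(\<lambda>x. \<Sum>e\<in>UK. (\<lambda>(n, a, b). inverse (e ^ k) * c n (fst (rotI (cnj e) (a,b))) (snd (rotI (cnj e) (a,b))) *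
            e2pi (of_nat n * \<tau> + gauss a b / 2 * z1 + cnj (gauss a b / 2) * z2)) x) =
     (\<lambda>(n, a, b). (\<Sum>e\<in>UK. inverse (e ^ k) * c n (fst (rotI (cnj e) (a,b))) (snd (rotI (cnj e) (a,b)))) *
            e2pi (of_nat n * \<tau> + gauss a b / 2 * z1 + cnj (gauss a b / 2) * z2))"
    by (auto simp: fun_eq_iff sum_distrib_right)
  ultimately show "((\<lambda>(n, a, b). (\<Sum>e\<in>UK. inverse (e ^ k) * c n (fst (rotI (cnj e) (a,b))) (snd (rotI (cnj e) (a,b)))) *
            e2pi (of_nat n * \<tau> + gauss a b / 2 * z1 + cnj (gauss a b / 2) * z2))
      has_sum LamK k \<psi> \<tau> z1 z2) {(n, a, b). a ^ 2 + b ^ 2 \<le> 4 * int n * int m}"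
    unfolding LamK_def by metis
qed

lemma slashEI_LamK:
  assumes e: "e \<in> UK"
  shows "slashEI k e (LamK k \<psi>) \<tau> z1 z2 = LamK k \<psi> \<tau> z1 z2"
proof -
  have "slashEI k e (LamK k \<psi>) \<tau> z1 z2 = (\<Sum>f\<in>UK. inverse ((f * e) ^ k) * \<psi> \<tau> ((f * e) * z1) (cnj (f * e) * z2))"
    by (simp add: slashEI_def LamK_def sum_distrib_left power_mult_distrib algebra_simps)
  also have "\<dots> = LamK k \<psi> \<tau> z1 z2"
    unfolding LamK_def slashEI_def
    apply (rule sum.reindex_bij_witness[where j="\<lambda>f. f * e" and i="\<lambda>f. f * cnj e"])
    using e UK_unit[OF e] UK_unit'[OF e] UK_mult[OF _ e] UK_mult[OF _ UK_cnj[OF e]] by (auto simp: mult.assoc)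
  finally show ?thesis .
qed

lemma slashK_eps:
  "slashK k m e a b c d \<phi> \<tau> z1 z2 = slashK k m 1 a b c d (slashEI k e \<phi>) \<tau> z1 z2"
  by (simp add: slashK_def slashEI_def)

lemma slashK_1_slashEI:
  assumes e: "e \<in> UK" and inv: "\<forall>\<tau> z1 z2. Im \<tau> > 0 \<longrightarrow> slashK k m 1 a b c d \<psi> \<tau> z1 z2 = \<psi> \<tau> z1 z2"
      and t: "Im \<tau> > 0"
  shows "slashK k m 1 a b c d (slashEI k e \<psi>) \<tau> z1 z2 = slashEI k e \<psi> \<tau> z1 z2"
proof -
  have ee: "e * z1 * (cnj e * z2) = z1 * z2" using UK_unit[OF e] by (simp add: algebra_simps)
  have "slashEI k e \<psi> \<tau> z1 z2 = inverse (e ^ k) * slashK k m 1 a b c d \<psi> \<tau> (e * z1) (cnj e * z2)"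
    using inv t by (simp add: slashEI_def)
  also have "\<dots> = slashK k m 1 a b c d (slashEI k e \<psi>) \<tau> z1 z2"
  proof -
    have EXP: "- of_nat m * of_int c * (e * z1) * (cnj e * z2) / (of_int c * \<tau> + of_int d) = - of_nat m * of_int c * z1 * z2 / (of_int c * \<tau> + of_int d)"
      by (metis ee mult.assoc)
    show ?thesis unfolding slashK_def slashEI_def EXP by (simp add: algebra_simps)
  qed
  finally show ?thesis ..
qed

lemma ellK_slashEI:
  assumes e: "e \<in> UK"
    and inv: "\<forall>l1 l2 u1 u2 \<tau> z1 z2. Im \<tau> > 0 \<longrightarrow> ellK m (gauss l1 l2) (gauss u1 u2) \<psi> \<tau> z1 z2 = \<psi> \<tau> z1 z2"
    and t: "Im \<tau> > 0"
  shows "ellK m (gauss l1 l2) (gauss u1 u2) (slashEI k e \<psi>) \<tau> z1 z2 = slashEI k e \<psi> \<tau> z1 z2"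
proof -
  define L where "L = gauss l1 l2"
  define M where "M = gauss u1 u2"
  have ee: "e * cnj e = 1" by (rule UK_unit[OF e])
  have inv': "\<psi> \<tau> w1 w2 = ellK m (e * L) (e * M) \<psi> \<tau> w1 w2" for w1 w2
    using inv t gauss_rotI[OF e, of l1 l2] gauss_rotI[OF e, of u1 u2] unfolding L_def M_def by metis
  have EXP: "of_nat m * (e * L * cnj (e * L) * \<tau> + cnj (e * L) * (e * z1) + e * L * (cnj e * z2))
      = of_nat m * (L * cnj L * \<tau> + cnj L * z1 + L * z2)"
  proof -
    have "of_nat m * (e * L * cnj (e * L) * \<tau> + cnj (e * L) * (e * z1) + e * L * (cnj e * z2))
      = (e * cnj e) * (of_nat m * (L * cnj L * \<tau> + cnj L * z1 + L * z2))"
      by (simp add: algebra_simps)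
    then show ?thesis using ee by simp
  qed
  have A1: "e * z1 + e * L * \<tau> + e * M = e * (z1 + L * \<tau> + M)" by (simp add: algebra_simps)
  have A2: "cnj e * z2 + cnj (e * L) * \<tau> + cnj (e * M) = cnj e * (z2 + cnj L * \<tau> + cnj M)" by (simp add: algebra_simps)
  have "slashEI k e \<psi> \<tau> z1 z2 = inverse (e ^ k) * ellK m (e * L) (e * M) \<psi> \<tau> (e * z1) (cnj e * z2)"
    unfolding slashEI_def using inv' by metis
  also have "\<dots> = ellK m L M (slashEI k e \<psi>) \<tau> z1 z2"
    unfolding ellK_def slashEI_def EXP A1 A2 by (simp add: algebra_simps)
  finally show ?thesis unfolding L_def M_def ..
qed

lemma LamK_JK:
  assumes p: "\<psi> \<in> J1K k m"
  shows "LamK k \<psi> \<in> JK k m"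
proof -
  have h: "holo3 (\<lambda>p. \<psi> (fst p) (fst (snd p)) (snd (snd p))) UH3"
    and sl: "\<And>a b c d \<tau> z1 z2. SL2Z a b c d \<Longrightarrow> Im \<tau> > 0 \<Longrightarrow> slashK k m 1 a b c d \<psi> \<tau> z1 z2 = \<psi> \<tau> z1 z2"
    and el: "\<forall>l1 l2 u1 u2 \<tau> z1 z2. Im \<tau> > 0 \<longrightarrow> ellK m (gauss l1 l2) (gauss u1 u2) \<psi> \<tau> z1 z2 = \<psi> \<tau> z1 z2"
    using p unfolding J1K_def JKgen_def UH3_def by auto
  obtain c where c: "fourierK m \<psi> c" using p unfolding J1K_def JKgen_def by auto
  have H: "holo3 (\<lambda>p. LamK k \<psi> (fst p) (fst (snd p)) (snd (snd p))) UH3"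
    unfolding LamK_def by (rule holo3_sum[OF finite_UK holo3_slashEI[OF h]])
  have S: "slashK k m e a b c d (LamK k \<psi>) \<tau> z1 z2 = LamK k \<psi> \<tau> z1 z2"
    if e: "e \<in> UK" and s: "SL2Z a b c d" and t: "Im \<tau> > 0" for e a b c d \<tau> z1 z2
  proof -
    have "slashK k m e a b c d (LamK k \<psi>) \<tau> z1 z2 = slashK k m 1 a b c d (slashEI k e (LamK k \<psi>)) \<tau> z1 z2"
      by (rule slashK_eps)
    also have "\<dots> = slashK k m 1 a b c d (LamK k \<psi>) \<tau> z1 z2"
    proof -
      have "slashEI k e (LamK k \<psi>) = LamK k \<psi>" by (intro ext) (rule slashEI_LamK[OF e])
      then show ?thesis by simp
    qed
    also have "\<dots> = (\<Sum>f\<in>UK. slashK k m 1 a b c d (slashEI k f \<psi>) \<tau> z1 z2)"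
      by (simp add: slashK_def LamK_def sum_distrib_left)
    also have "\<dots> = LamK k \<psi> \<tau> z1 z2"
      unfolding LamK_def using slashK_1_slashEI[OF _ _ t] sl[OF s] by (intro sum.cong) auto
    finally show ?thesis .
  qed
  have E: "ellK m (gauss l1 l2) (gauss u1 u2) (LamK k \<psi>) \<tau> z1 z2 = LamK k \<psi> \<tau> z1 z2"
    if t: "Im \<tau> > 0" for l1 l2 u1 u2 \<tau> z1 z2
  proof -
    have "ellK m (gauss l1 l2) (gauss u1 u2) (LamK k \<psi>) \<tau> z1 z2 = (\<Sum>f\<in>UK. ellK m (gauss l1 l2) (gauss u1 u2) (slashEI k f \<psi>) \<tau> z1 z2)"
      by (simp add: ellK_def LamK_def sum_distrib_left)
    also have "\<dots> = LamK k \<psi> \<tau> z1 z2"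
      unfolding LamK_def using ellK_slashEI[OF _ el t] by (intro sum.cong) auto
    finally show ?thesis .
  qed
  show ?thesis
    unfolding JK_def JKgen_def using H S E fourier_LamK[OF c, of k] by (auto simp: UH3_def)
qed

lemma cusp_LamK:
  assumes f: "fourierK m \<psi> c" and v: "\<forall>n a b. a ^ 2 + b ^ 2 = 4 * int n * int m \<longrightarrow> c n a b = 0"
  shows "\<exists>c'. fourierK m (LamK k \<psi>) c' \<and> (\<forall>n a b. a ^ 2 + b ^ 2 = 4 * int n * int m \<longrightarrow> c' n a b = 0)"
proof (intro exI conjI allI impI)
  show "fourierK m (LamK k \<psi>) (\<lambda>n a b. \<Sum>e\<in>UK. inverse (e ^ k) * c n (fst (rotI (cnj e) (a,b))) (snd (rotI (cnj e) (a,b))))"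
    by (rule fourier_LamK[OF f])
  fix n a b assume h: "a ^ 2 + b ^ 2 = 4 * int n * int m"
  show "(\<Sum>e\<in>UK. inverse (e ^ k) * c n (fst (rotI (cnj e) (a,b))) (snd (rotI (cnj e) (a,b)))) = 0"
  proof (rule sum.neutral, intro ballI)
    fix e assume "e \<in> UK"
    then have "(fst (rotI (cnj e) (a,b)))^2 + (snd (rotI (cnj e) (a,b)))^2 = 4 * int n * int m"
      using rotI_sq[OF UK_cnj, of e a b] h by simp
    then show "inverse (e ^ k) * c n (fst (rotI (cnj e) (a,b))) (snd (rotI (cnj e) (a,b))) = 0"
      using v by simp
  qed
qed

lemma JK_J1K: "\<psi> \<in> JK k m \<Longrightarrow> \<psi> \<in> J1K k m"
  unfolding JK_def J1K_def JKgen_def UK_def by auto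

lemma HK_eq: "HK k1 k2 \<phi>1 \<phi>2 = LamK (k1 + k2) (Pf \<phi>1 \<phi>2)"
  unfolding HK_def LamK_def Pf_def ..

theorem corollary4p6:
  fixes k1 k2 m :: nat
  assumes "0 < k1" and "0 < k2" and "0 < m"
  shows "(\<forall>\<psi> \<in> J1K (k1 + k2) m. LamK (k1 + k2) \<psi> \<in> JK (k1 + k2) m)
    \<and> (\<forall>\<psi> \<in> J1K (k1 + k2) m. \<forall>\<psi>' \<in> J1K (k1 + k2) m. \<forall>s::complex.
         LamK (k1 + k2) (\<lambda>\<tau> z1 z2. s * \<psi> \<tau> z1 z2 + \<psi>' \<tau> z1 z2)
         = (\<lambda>\<tau> z1 z2. s * LamK (k1 + k2) \<psi> \<tau> z1 z2 + LamK (k1 + k2) \<psi>' \<tau> z1 z2))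
    \<and> (\<forall>\<phi>1 \<in> Jac k1 m. \<forall>\<phi>2 \<in> Jac k2 m. HK k1 k2 \<phi>1 \<phi>2 \<in> J1K (k1 + k2) m)
    \<and> (\<forall>\<phi>1 \<in> Jac k1 m. \<forall>\<phi>1' \<in> Jac k1 m. \<forall>\<phi>2 \<in> Jac k2 m. \<forall>s::complex.
         HK k1 k2 (\<lambda>\<tau> z. s * \<phi>1 \<tau> z + \<phi>1' \<tau> z) \<phi>2
         = (\<lambda>\<tau> z1 z2. s * HK k1 k2 \<phi>1 \<phi>2 \<tau> z1 z2 + HK k1 k2 \<phi>1' \<phi>2 \<tau> z1 z2))
    \<and> (\<forall>\<phi>1 \<in> Jac k1 m. \<forall>\<phi>2 \<in> Jac k2 m. \<forall>\<phi>2' \<in> Jac k2 m. \<forall>s::complex.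
         HK k1 k2 \<phi>1 (\<lambda>\<tau> z. s * \<phi>2 \<tau> z + \<phi>2' \<tau> z)
         = (\<lambda>\<tau> z1 z2. s * HK k1 k2 \<phi>1 \<phi>2 \<tau> z1 z2 + HK k1 k2 \<phi>1 \<phi>2' \<tau> z1 z2))
    \<and> (\<forall>\<phi>1 \<in> JacCusp k1 m. \<forall>\<phi>2 \<in> JacCusp k2 m.
         LamK (k1 + k2) (HK k1 k2 \<phi>1 \<phi>2) \<in> JKCusp (k1 + k2) m)"
proof (intro conjI ballI allI)
  show "LamK (k1 + k2) \<psi> \<in> JK (k1 + k2) m" if "\<psi> \<in> J1K (k1 + k2) m" for \<psi>
    using LamK_JK[OF that] .
  show "LamK (k1 + k2) (\<lambda>\<tau> z1 z2. s * \<psi> \<tau> z1 z2 + \<psi>' \<tau> z1 z2)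
         = (\<lambda>\<tau> z1 z2. s * LamK (k1 + k2) \<psi> \<tau> z1 z2 + LamK (k1 + k2) \<psi>' \<tau> z1 z2)" for \<psi> \<psi>' s
    by (simp add: fun_eq_iff LamK_def slashEI_def sum.distrib sum_distrib_left algebra_simps)
  show "HK k1 k2 \<phi>1 \<phi>2 \<in> J1K (k1 + k2) m" if "\<phi>1 \<in> Jac k1 m" "\<phi>2 \<in> Jac k2 m" for \<phi>1 \<phi>2
    unfolding HK_eq by (rule JK_J1K[OF LamK_JK[OF Pf_J1K[OF that]]])
  show "HK k1 k2 (\<lambda>\<tau> z. s * \<phi>1 \<tau> z + \<phi>1' \<tau> z) \<phi>2
         = (\<lambda>\<tau> z1 z2. s * HK k1 k2 \<phi>1 \<phi>2 \<tau> z1 z2 + HK k1 k2 \<phi>1' \<phi>2 \<tau> z1 z2)" for \<phi>1 \<phi>1' \<phi>2 s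
    by (simp add: fun_eq_iff HK_def slashEI_def sum.distrib sum_distrib_left algebra_simps)
  show "HK k1 k2 \<phi>1 (\<lambda>\<tau> z. s * \<phi>2 \<tau> z + \<phi>2' \<tau> z)
         = (\<lambda>\<tau> z1 z2. s * HK k1 k2 \<phi>1 \<phi>2 \<tau> z1 z2 + HK k1 k2 \<phi>1 \<phi>2' \<tau> z1 z2)" for \<phi>1 \<phi>2 \<phi>2' s
    by (simp add: fun_eq_iff HK_def slashEI_def sum.distrib sum_distrib_left algebra_simps)
  show "LamK (k1 + k2) (HK k1 k2 \<phi>1 \<phi>2) \<in> JKCusp (k1 + k2) m"
    if a1: "\<phi>1 \<in> JacCusp k1 m" and a2: "\<phi>2 \<in> JacCusp k2 m" for \<phi>1 \<phi>2
  proof -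
    have j1: "\<phi>1 \<in> Jac k1 m" and j2: "\<phi>2 \<in> Jac k2 m" using a1 a2 by (auto simp: JacCusp_def)
    obtain c1 where c1: "fourierJ m \<phi>1 c1" "\<forall>n r. r ^ 2 = 4 * int n * int m \<longrightarrow> c1 n r = 0"
      using a1 by (auto simp: JacCusp_def)
    obtain c2 where c2: "fourierJ m \<phi>2 c2" "\<forall>n r. r ^ 2 = 4 * int n * int m \<longrightarrow> c2 n r = 0"
      using a2 by (auto simp: JacCusp_def)
    have fP: "fourierK m (Pf \<phi>1 \<phi>2) (conv m c1 c2)"
      using fourier_prod[OF c1(1) c2(1)] by (simp add: Pf_def)
    have vP: "\<forall>n a b. a ^ 2 + b ^ 2 = 4 * int n * int m \<longrightarrow> conv m c1 c2 n a b = 0"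
      using conv_cusp[OF c1(2) c2(2)] by blast
    obtain c' where c': "fourierK m (HK k1 k2 \<phi>1 \<phi>2) c'" "\<forall>n a b. a ^ 2 + b ^ 2 = 4 * int n * int m \<longrightarrow> c' n a b = 0"
      using cusp_LamK[OF fP vP, of "k1 + k2"] unfolding HK_eq by blast
    obtain c'' where c'': "fourierK m (LamK (k1 + k2) (HK k1 k2 \<phi>1 \<phi>2)) c''" "\<forall>n a b. a ^ 2 + b ^ 2 = 4 * int n * int m \<longrightarrow> c'' n a b = 0"
      using cusp_LamK[OF c'] by blast
    have "LamK (k1 + k2) (HK k1 k2 \<phi>1 \<phi>2) \<in> JK (k1 + k2) m"
      unfolding HK_eq by (rule LamK_JK[OF JK_J1K[OF LamK_JK[OF Pf_J1K[OF j1 j2]]]])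
    then show ?thesis unfolding JKCusp_def using c'' by blast
  qed
qed
end
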